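(* Let $\gamma:=2\Delta\lambda\max\{\lambda,\mu\}$, $\beta:=(4\Delta\lambda\gamma)^d$ and $\epsilon>0$. For every $v\in V$ let $\mathfrak a'_v:\mathbb R\to\mathbb R$ be an $\epsilon$-approximation of $\mathfrak a_v$ that is Lipschitz continuous with constant $2\lambda$, and let $\mathfrak A':=(V,E,(\mathfrak a'_v)_{v\in V})$. Then for all $\mathbf x\in\mathbb R^p$, $\mathbf b\in\mathbb R^V$ and $\mathbf w\in\mathbb R^E$, $$\|\mathfrak A(\mathbf x,\mathbf w,\mathbf b)-\mathfrak A'(\mathbf x,\mathbf w,\mathbf b)\|_\infty\le\beta(\|\mathbf w\|_\infty+1)^d(\|\mathbf x\|_\infty+\|\mathbf b\|_\infty+1)\epsilon.$$
   Context: $\mathfrak A=(V,E,(\mathfrak a_v)_{v\in V})$ is an FNN architecture: $(V,E)$ is a finite dag and each $\mathfrak a_v:\mathbb R\to\mathbb R$ is Lipschitz continuous. Sources are input nodes $X_1,\dots,X_p$, sinks are output nodes. For an architecture $\mathfrak B$ with activations $\mathfrak b_v$ on the same dag, $f_{\mathfrak B,X_i}(\mathbf x,\mathbf w,\mathbf b)=x_i$ and for non-input $v$, $f_{\mathfrak B,v}(\mathbf x,\mathbf w,\mathbf b)=\mathfrak b_v\big(b_v+\sum_{u:uv\in E}f_{\mathfrak B,u}(\mathbf x,\mathbf w,\mathbf b)w_{uv}\big)$; $\mathfrak B(\mathbf x,\mathbf w,\mathbf b)$ is the tuple of values at the outputs. $d$ is the depth of the dag, $\Delta\ge1$ its maximum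 in-degree, $\lambda\in\mathbb N_{>0}$ a Lipschitz constant of all $\mathfrak a_v$, $\mu=\max_v\lceil|\mathfrak a_v(0)|\rceil$. A function $g$ is an $\epsilon$-approximation of $f$ if $|f(x)-g(x)|\le\epsilon|f(x)|+\epsilon$ for all $x\in\mathbb R$. *)

theory Defs
  imports "HOL-Analysis.Analysis"
begin

definition fnn_dag :: "'v set \<Rightarrow> ('v \<times> 'v) set \<Rightarrow> bool" where
  "fnn_dag V E \<longleftrightarrow> finite V \<and> E \<subseteq> V \<times> V \<and> acyclic E"

definition in_nodes :: "'v set \<Rightarrow> ('v \<times> 'v) set \<Rightarrow> 'v set" where
  "in_nodes V E = {v \<in> V. \<not> (\<exists>u. (u, v) \<in> E)}"

definition out_nodes :: "'v set \<Rightarrow> ('v \<times> 'v) set \<Rightarrow> 'v set" where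
  "out_nodes V E = {v \<in> V. \<not> (\<exists>u. (v, u) \<in> E)}"

definition in_degree :: "('v \<times> 'v) set \<Rightarrow> 'v \<Rightarrow> nat" where
  "in_degree E v = card {u. (u, v) \<in> E}"

definition max_in_degree :: "'v set \<Rightarrow> ('v \<times> 'v) set \<Rightarrow> nat" where
  "max_in_degree V E = Max (insert 0 (in_degree E ` V))"

definition dag_depth :: "('v \<times> 'v) set \<Rightarrow> nat" where
  "dag_depth E = Max {n. \<exists>ps. length ps = Suc n \<and> (\<forall>i<n. (ps ! i, ps ! Suc i) \<in> E)}"

text \<open>Evaluation with fuel; for an acyclic graph, fuel card V suffices to reach the
  fixed point of the recursive definition of f_{B,v}.\<close>
fun fnn_eval_fuel :: "nat \<Rightarrow> 'v set \<Rightarrow> ('v \<times> 'v) set \<Rightarrow> ('v \<Rightarrow> real \<Rightarrow> real)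
    \<Rightarrow> ('v \<Rightarrow> real) \<Rightarrow> ('v \<times> 'v \<Rightarrow> real) \<Rightarrow> ('v \<Rightarrow> real) \<Rightarrow> 'v \<Rightarrow> real" where
  "fnn_eval_fuel 0 V E a x w b v = x v"
| "fnn_eval_fuel (Suc n) V E a x w b v =
     (if v \<in> in_nodes V E then x v
      else a v (b v + (\<Sum>u\<in>{u. (u, v) \<in> E}. fnn_eval_fuel n V E a x w b u * w (u, v))))"

definition fnn_eval :: "'v set \<Rightarrow> ('v \<times> 'v) set \<Rightarrow> ('v \<Rightarrow> real \<Rightarrow> real)
    \<Rightarrow> ('v \<Rightarrow> real) \<Rightarrow> ('v \<times> 'v \<Rightarrow> real) \<Rightarrow> ('v \<Rightarrow> real) \<Rightarrow> 'v \<Rightarrow> real" where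
  "fnn_eval V E a x w b v = fnn_eval_fuel (card V) V E a x w b v"

definition sup_norm :: "'i set \<Rightarrow> ('i \<Rightarrow> real) \<Rightarrow> real" where
  "sup_norm S f = Max (insert 0 ((\<lambda>i. \<bar>f i\<bar>) ` S))"

definition eps_approx :: "real \<Rightarrow> (real \<Rightarrow> real) \<Rightarrow> (real \<Rightarrow> real) \<Rightarrow> bool" where
  "eps_approx \<epsilon> f g \<longleftrightarrow> (\<forall>x. \<bar>f x - g x\<bar> \<le> \<epsilon> * \<bar>f x\<bar> + \<epsilon>)"

definition act_mu :: "'v set \<Rightarrow> ('v \<Rightarrow> real \<Rightarrow> real) \<Rightarrow> nat" where
  "act_mu V a = Max (insert 0 ((\<lambda>v. nat \<lceil>\<bar>a v 0\<bar>\<rceil>) ` V))"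

end

theory Submission
  imports Defs
begin

lemma arith1:
  fixes bn S X D B W1 G L M mu :: real
  assumes "0\<le>bn" "bn+1 \<le> X" "0 \<le> S" "S \<le> D*B*W1" "B = G^n * X" "G = 2*D*L*M*W1"
    "1\<le>D" "1\<le>L" "L\<le>M" "0\<le>mu" "mu \<le> M" "1 \<le> W1" "1\<le>X"
  shows "L*(bn + S) + mu \<le> G^(Suc n) * X"
proof -
  have G1: "1 \<le> G" using assms by (simp add: one_le_mult_iff mult_ge1_I)
  have Gn: "1 \<le> G^n" using G1 by simp
  have LM: "L \<le> L*M" "M \<le> L*M" using assms by (simp_all add: mult_ge1_I)
  have "L*bn \<le> L*M*bn" using assms LM by (intro mult_right_mono) auto
  hence "L*bn + mu \<le> L*M*bn + L*M" using assms LM by linarith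
  also have "\<dots> = L*M*(bn+1)" by (simp add: algebra_simps)
  finally have "L*bn + mu \<le> L*M*(bn+1)" .
  also have "\<dots> \<le> L*M*X" using assms by (intro mult_left_mono) auto
  also have "\<dots> \<le> L*M*(D*W1*G^n)*X"
  proof -
    have "1 \<le> D*W1*G^n" using assms Gn by (simp add: mult_ge1_I)
    hence "L*M*1 \<le> L*M*(D*W1*G^n)" using assms by (intro mult_left_mono) auto
    thus ?thesis using assms by (intro mult_right_mono) auto
  qed
  finally have 1: "L*bn + mu \<le> L*M*(D*W1*G^n)*X" .
  have "L*S \<le> L*(D*B*W1)" using assms by (intro mult_left_mono) auto
  also have "\<dots> \<le> L*M*(D*W1*G^n)*X"
  proof -
    have "L*(D*B*W1) = L*1*(D*W1*G^n)*X" using assms by simp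
    also have "\<dots> \<le> L*M*(D*W1*G^n)*X"
      using assms Gn by (intro mult_right_mono mult_left_mono) (auto simp: mult_ge1_I)
    finally show ?thesis .
  qed
  finally have 2: "L*S \<le> L*M*(D*W1*G^n)*X" .
  obtain P where P: "P = G^n" by blast
  have "G^(Suc n) * X = G*P*X" using P by simp
  also have "\<dots> = 2*(L*M*(D*W1*P)*X)" using assms(6) by (simp add: algebra_simps)
  finally have "G^(Suc n) * X = 2*(L*M*(D*W1*G^n)*X)" using P by simp
  moreover have "L*(bn + S) = L*bn + L*S" by (simp add: distrib_left)
  ultimately show ?thesis using 1 2 by linarith
qed

lemma arith2:
  fixes A Ds X D G K W1 L M e :: real
  assumes "0 \<le> A" "A \<le> G^(Suc n) * X" "0 \<le> Ds" "Ds \<le> D*(K^n*X*e)*W1"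
    "G = 2*D*L*M*W1" "K = 4*D*L*(2*D*L*M)*W1"
    "1\<le>D" "1\<le>L" "L\<le>M" "1 \<le> W1" "1\<le>X" "0 < e"
  shows "e*A + e + 2*L*Ds \<le> K^(Suc n) * X * e"
proof -
  have G1: "1 \<le> G" using assms by (simp add: one_le_mult_iff mult_ge1_I)
  have GK: "G \<le> K"
  proof -
    have "G = 1*(2*D*L*M*W1)" using assms by simp
    also have "\<dots> \<le> (4*D*L)*(2*D*L*M*W1)" using assms G1
      by (intro mult_right_mono) (auto simp: mult_ge1_I)
    finally show ?thesis using assms by (simp add: algebra_simps)
  qed
  have K1: "1 \<le> K" using G1 GK by simp
  have GnK: "G^n \<le> K^n" using G1 GK by (intro power_mono) auto
  have "A + 1 \<le> 2*(G^(Suc n) * X)"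
  proof -
    have "1 \<le> G^(Suc n) * X" using assms G1 by (simp add: mult_ge1_I)
    thus ?thesis using assms by linarith
  qed
  also have "\<dots> = 2*G*(G^n*X)" by (simp add: algebra_simps)
  also have "\<dots> \<le> 2*G*(K^n*X)" using G1 GnK assms by (intro mult_left_mono mult_right_mono) auto
  also have "\<dots> \<le> (2*D*L*(2*D*L*M)*W1)*(K^n*X)"
  proof -
    have "2*G = 1*(2*(2*D*L*M*W1))" using assms by simp
    also have "\<dots> \<le> (D*L)*(2*(2*D*L*M*W1))" using assms G1
      by (intro mult_right_mono) (auto simp: mult_ge1_I)
    finally have "2*G \<le> 2*D*L*(2*D*L*M)*W1" by (simp add: algebra_simps)
    moreover have "0 \<le> K^n*X" using K1 assms by simp
    ultimately show ?thesis by (rule mult_right_mono)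
  qed
  finally have 0: "A + 1 \<le> (2*D*L*(2*D*L*M)*W1)*(K^n*X)" .
  have "e*(A + 1) \<le> e*((2*D*L*(2*D*L*M)*W1)*(K^n*X))"
    using mult_left_mono[OF 0, of e] assms by simp
  hence 1: "e*A + e \<le> e*((2*D*L*(2*D*L*M)*W1)*(K^n*X))" by (simp add: distrib_left)
  have "2*L*Ds \<le> 2*L*(D*(K^n*X*e)*W1)" using assms by (intro mult_left_mono) auto
  also have "\<dots> = e*((2*D*L*1*W1)*(K^n*X))" by (simp add: algebra_simps)
  also have "\<dots> \<le> e*((2*D*L*(2*D*L*M)*W1)*(K^n*X))"
  proof -
    have "1 \<le> 2*D*L*M" using assms by (simp add: mult_ge1_I)
    hence "2*D*L*1*W1 \<le> 2*D*L*(2*D*L*M)*W1" using assms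
      by (intro mult_right_mono mult_left_mono) auto
    thus ?thesis using assms K1 by (intro mult_left_mono mult_right_mono) auto
  qed
  finally have 2: "2*L*Ds \<le> e*((2*D*L*(2*D*L*M)*W1)*(K^n*X))" .
  have "K^(Suc n) * X * e = 2 * (e*((2*D*L*(2*D*L*M)*W1)*(K^n*X)))"
    using assms by (simp add: algebra_simps)
  thus ?thesis using 1 2 by linarith
qed

lemma path_trancl:
  assumes "\<forall>i<n. (p i, p (Suc i)) \<in> E" "i < j" "j \<le> n"
  shows "(p i, p j) \<in> E\<^sup>+"
  using assms(2,3)
proof (induction j)
  case 0 thus ?case by simp
next
  case (Suc j)
  have e: "(p j, p (Suc j)) \<in> E" using assms(1) Suc.prems by simp
  show ?case
  proof (cases "i = j")
    case True thus ?thesis using e by auto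
  next
    case False hence "(p i, p j) \<in> E\<^sup>+" using Suc by simp
    thus ?thesis using e by (rule trancl_into_trancl)
  qed
qed

lemma path_bound:
  assumes "fnn_dag V E" "V \<noteq> {}" "\<forall>i<n. (p i, p (Suc i)) \<in> E"
  shows "n < card V"
proof (cases "n = 0")
  case True thus ?thesis using assms unfolding fnn_dag_def by (simp add: card_gt_0_iff)
next
  case False
  have fin: "finite V" and EV: "E \<subseteq> V \<times> V" and ac: "acyclic E"
    using assms(1) unfolding fnn_dag_def by auto
  have sub: "p ` {0..n} \<subseteq> V"
  proof
    fix z assume "z \<in> p ` {0..n}"
    then obtain k where k: "k \<le> n" "z = p k" by auto
    show "z \<in> V"
    proof (cases "k < n")
      case True thus ?thesis using assms(3) EV k by auto
    next
      case False hence "k = Suc (n-1)" using k \<open>n\<noteq>0\<close> by simp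
      moreover have "n - 1 < n" using \<open>n\<noteq>0\<close> by simp
      hence "(p (n-1), p (Suc (n-1))) \<in> E" using assms(3) by blast
      ultimately show ?thesis using EV k by auto
    qed
  qed
  have key: False if "i < j" "j \<le> n" "p i = p j" for i j
  proof -
    have "(p i, p j) \<in> E\<^sup>+" using path_trancl[OF assms(3) that(1,2)] .
    hence "(p i, p i) \<in> E\<^sup>+" using that(3) by simp
    thus False using ac unfolding acyclic_def by blast
  qed
  have inj: "inj_on p {0..n}"
  proof (rule inj_onI, rule ccontr)
    fix i j assume ij: "i \<in> {0..n}" "j \<in> {0..n}" "p i = p j" "i \<noteq> j"
    show False
    proof (cases "i < j")
      case True thus False using key ij by auto
    next
      case False hence "j < i" using ij by simp
      thus False using key[of j i] ij by auto
    qed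
  qed
  have "card (p ` {0..n}) = Suc n" using card_image[OF inj] by simp
  moreover have "card (p ` {0..n}) \<le> card V" using card_mono[OF fin sub] .
  ultimately show ?thesis by simp
qed

lemma depth_props:
  assumes "fnn_dag V E" "V \<noteq> {}"
  shows "dag_depth E < card V" and "\<And>n p. \<forall>i<n. (p i, p (Suc i)) \<in> E \<Longrightarrow> n \<le> dag_depth E"
proof -
  let ?S = "{n. \<exists>ps. length ps = Suc n \<and> (\<forall>i<n. (ps ! i, ps ! Suc i) \<in> E)}"
  have Ssub: "?S \<subseteq> {..<card V}"
  proof
    fix n assume "n \<in> ?S"
    then obtain ps where ps: "length ps = Suc n" "\<forall>i<n. (ps ! i, ps ! Suc i) \<in> E" by auto
    have "n < card V" using path_bound[OF assms, of n "\<lambda>i. ps ! i"] ps(2) by simp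
    thus "n \<in> {..<card V}" by simp
  qed
  have fS: "finite ?S" using Ssub finite_subset by blast
  have "0 \<in> ?S" by (auto intro: exI[of _ "[undefined]"])
  hence ne: "?S \<noteq> {}" by blast
  show "dag_depth E < card V" unfolding dag_depth_def using Max_in[OF fS ne] Ssub by auto
  show "n \<le> dag_depth E" if "\<forall>i<n. (p i, p (Suc i)) \<in> E" for n p
  proof -
    have "n \<in> ?S" using that
      by (intro CollectI exI[of _ "map p [0..<Suc n]"]) (simp del: upt_Suc)
    thus ?thesis unfolding dag_depth_def using Max_ge[OF fS] by blast
  qed
qed

lemma sum_bound:
  fixes f g :: "'a \<Rightarrow> real"
  assumes "finite P" "\<forall>u\<in>P. \<bar>f u\<bar> \<le> B" "\<forall>u\<in>P. \<bar>g u\<bar> \<le> Wn" "real (card P) \<le> D"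
    "0 \<le> Wn" "0 \<le> B"
  shows "\<bar>\<Sum>u\<in>P. f u * g u\<bar> \<le> D * B * (Wn + 1)"
proof -
  have D0: "0 \<le> D" using assms(4) of_nat_0_le_iff order_trans by blast
  have "\<bar>\<Sum>u\<in>P. f u * g u\<bar> \<le> (\<Sum>u\<in>P. \<bar>f u * g u\<bar>)" by (rule sum_abs)
  also have "\<dots> \<le> (\<Sum>u\<in>P. B * Wn)"
    using assms by (intro sum_mono) (simp add: abs_mult mult_mono)
  also have "\<dots> = real (card P) * (B * Wn)" by simp
  also have "\<dots> \<le> D * (B * Wn)" using assms by (intro mult_right_mono) auto
  also have "\<dots> \<le> D * (B * (Wn + 1))" using assms D0 by (intro mult_left_mono) auto
  finally show ?thesis by (simp add: mult.assoc)
qed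

lemma fuel_input: "v \<in> in_nodes V E \<Longrightarrow> fnn_eval_fuel m V E a x w b v = x v"
  by (cases m) auto

lemma main_ind:
  fixes D L M Wn X e :: real
  assumes dag: "fnn_dag V E"
    and deg: "\<forall>v\<in>V. real (card {u. (u,v) \<in> E}) \<le> D" and D1: "1 \<le> D"
    and L1: "1 \<le> L" and LM: "L \<le> M"
    and lip: "\<forall>v\<in>V. L-lipschitz_on UNIV (a v)"
    and lip': "\<forall>v\<in>V. (2*L)-lipschitz_on UNIV (a' v)"
    and approx: "\<forall>v\<in>V. eps_approx e (a v) (a' v)" and e: "0 < e"
    and mu: "\<forall>v\<in>V. \<bar>a v 0\<bar> \<le> M"
    and Wn: "0 \<le> Wn" "\<forall>ed\<in>E. \<bar>w ed\<bar> \<le> Wn"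
    and xb: "\<forall>v\<in>in_nodes V E. \<bar>x v\<bar> \<le> X" "\<forall>v\<in>V. \<bar>b v\<bar> + 1 \<le> X" and X1: "1 \<le> X"
  shows "\<forall>v\<in>V. (\<not>(\<exists>p. p (Suc n) = v \<and> (\<forall>i<Suc n. (p i, p (Suc i)) \<in> E))) \<longrightarrow>
     (\<forall>m\<ge>n. \<bar>fnn_eval_fuel m V E a x w b v\<bar> \<le> (2*D*L*M*(Wn+1))^n * X \<and>
        \<bar>fnn_eval_fuel m V E a x w b v - fnn_eval_fuel m V E a' x w b v\<bar>
          \<le> (4*D*L*(2*D*L*M)*(Wn+1))^n * X * e)"
proof (induction n)
  case 0
  show ?case
  proof (intro ballI impI allI)
    fix v m assume v: "v \<in> V" and np: "\<not>(\<exists>p. p (Suc 0) = v \<and> (\<forall>i<Suc 0. (p i, p (Suc i)) \<in> E))"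
    have "v \<in> in_nodes V E"
    proof -
      { fix u assume "(u, v) \<in> E"
        hence "\<exists>p. p (Suc 0) = v \<and> (\<forall>i<Suc 0. (p i, p (Suc i)) \<in> E)"
          by (intro exI[of _ "\<lambda>i. if i = 0 then u else v"]) auto
        with np have False by blast }
      thus ?thesis using v unfolding in_nodes_def by auto
    qed
    thus "\<bar>fnn_eval_fuel m V E a x w b v\<bar> \<le> (2*D*L*M*(Wn+1))^0 * X \<and>
        \<bar>fnn_eval_fuel m V E a x w b v - fnn_eval_fuel m V E a' x w b v\<bar>
          \<le> (4*D*L*(2*D*L*M)*(Wn+1))^0 * X * e"
      using xb X1 e by (simp add: fuel_input)
  qed
next
  case (Suc n)
  define G where "G = 2*D*L*M*(Wn+1)"
  define K where "K = 4*D*L*(2*D*L*M)*(Wn+1)"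
  have M1: "1 \<le> M" using L1 LM by simp
  have G1: "1 \<le> G" unfolding G_def using D1 L1 M1 Wn by (simp add: mult_ge1_I)
  have K1: "1 \<le> K" unfolding K_def using D1 L1 M1 Wn by (simp add: mult_ge1_I)
  have EV: "E \<subseteq> V \<times> V" and finV: "finite V" using dag unfolding fnn_dag_def by auto
  show ?case unfolding G_def[symmetric] K_def[symmetric]
  proof (intro ballI impI allI)
    fix v m assume v: "v \<in> V"
      and np: "\<not>(\<exists>p. p (Suc (Suc n)) = v \<and> (\<forall>i<Suc (Suc n). (p i, p (Suc i)) \<in> E))"
      and m: "Suc n \<le> m"
    show "\<bar>fnn_eval_fuel m V E a x w b v\<bar> \<le> G^Suc n * X \<and>
        \<bar>fnn_eval_fuel m V E a x w b v - fnn_eval_fuel m V E a' x w b v\<bar> \<le> K^Suc n * X * e"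
    proof (cases "v \<in> in_nodes V E")
      case True
      have "X \<le> G^Suc n * X" using G1 X1 by (simp add: mult_ge1_I)
      moreover have "0 \<le> K^Suc n * X * e" using K1 X1 e by simp
      moreover have "\<bar>x v\<bar> \<le> X" using True xb by blast
      ultimately show ?thesis using True by (simp add: fuel_input)
    next
      case False
      obtain m' where m': "m = Suc m'" "n \<le> m'" using m by (cases m) auto
      let ?P = "{u. (u, v) \<in> E}"
      let ?F = "fnn_eval_fuel m' V E a x w b"
      let ?F' = "fnn_eval_fuel m' V E a' x w b"
      have finE: "finite E" using EV finV finite_subset by blast
      have finP: "finite ?P"
      proof -
        have "?P \<subseteq> fst ` E" by force
        thus ?thesis using finE finite_subset by blast
      qed
      have IH: "\<bar>?F u\<bar> \<le> G^n * X \<and> \<bar>?F u - ?F' u\<bar> \<le> K^n * X * e" if u: "u \<in> ?P" for u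
      proof -
        have uV: "u \<in> V" using u EV by auto
        have npu: "\<not>(\<exists>p. p (Suc n) = u \<and> (\<forall>i<Suc n. (p i, p (Suc i)) \<in> E))"
        proof
          assume "\<exists>p. p (Suc n) = u \<and> (\<forall>i<Suc n. (p i, p (Suc i)) \<in> E)"
          then obtain p where p: "p (Suc n) = u" "\<forall>i<Suc n. (p i, p (Suc i)) \<in> E" by blast
          have "\<forall>i<Suc (Suc n). ((p(Suc (Suc n) := v)) i, (p(Suc (Suc n) := v)) (Suc i)) \<in> E"
          proof (intro allI impI)
            fix i assume "i < Suc (Suc n)"
            then consider "i < Suc n" | "i = Suc n" by linarith
            thus "((p(Suc (Suc n) := v)) i, (p(Suc (Suc n) := v)) (Suc i)) \<in> E"
            proof cases
              case 1 thus ?thesis using p by simp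
            next
              case 2 thus ?thesis using p u by simp
            qed
          qed
          thus False using np by (metis fun_upd_same)
        qed
        show ?thesis using Suc.IH uV npu m'(2) unfolding G_def K_def by blast
      qed
      define t where "t = b v + (\<Sum>u\<in>?P. ?F u * w (u, v))"
      define t' where "t' = b v + (\<Sum>u\<in>?P. ?F' u * w (u, v))"
      have ev1: "fnn_eval_fuel m V E a x w b v = a v t" using False m' unfolding t_def by simp
      have ev2: "fnn_eval_fuel m V E a' x w b v = a' v t'" using False m' unfolding t'_def by simp
      have degv: "real (card ?P) \<le> D" using deg v by blast
      have wP: "\<forall>u\<in>?P. \<bar>w (u, v)\<bar> \<le> Wn" using Wn by blast
      have S: "\<bar>\<Sum>u\<in>?P. ?F u * w (u, v)\<bar> \<le> D * (G^n * X) * (Wn + 1)"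
        using IH G1 X1 by (intro sum_bound[OF finP _ wP degv Wn(1)]) auto
      have "\<bar>t - t'\<bar> = \<bar>\<Sum>u\<in>?P. (?F u - ?F' u) * w (u, v)\<bar>"
        unfolding t_def t'_def by (simp add: sum_subtractf left_diff_distrib)
      also have "\<dots> \<le> D * (K^n * X * e) * (Wn + 1)"
        using IH K1 X1 e by (intro sum_bound[OF finP _ wP degv Wn(1)]) auto
      finally have Dt: "\<bar>t - t'\<bar> \<le> D * (K^n * X * e) * (Wn + 1)" .
      have "dist (a v t) (a v 0) \<le> L * dist t 0" using lip v by (intro lipschitz_onD) auto
      hence "\<bar>a v t\<bar> \<le> L * \<bar>t\<bar> + \<bar>a v 0\<bar>" by (simp add: dist_real_def)
      moreover have "\<bar>t\<bar> \<le> \<bar>b v\<bar> + \<bar>\<Sum>u\<in>?P. ?F u * w (u, v)\<bar>" unfolding t_def by (rule abs_triangle_ineq)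
      hence "L * \<bar>t\<bar> \<le> L * (\<bar>b v\<bar> + \<bar>\<Sum>u\<in>?P. ?F u * w (u, v)\<bar>)"
        using L1 by (intro mult_left_mono) auto
      ultimately have "\<bar>a v t\<bar> \<le> L * (\<bar>b v\<bar> + \<bar>\<Sum>u\<in>?P. ?F u * w (u, v)\<bar>) + \<bar>a v 0\<bar>"
        by linarith
      also have "\<dots> \<le> G^(Suc n) * X"
        by (rule arith1[OF _ _ _ S refl G_def[unfolded mult.assoc[symmetric]] D1 L1 LM _ _ _ X1])
          (use xb v mu Wn in auto)
      finally have A: "\<bar>a v t\<bar> \<le> G^(Suc n) * X" .
      have "\<bar>a v t - a' v t\<bar> \<le> e * \<bar>a v t\<bar> + e" using approx v unfolding eps_approx_def by blast
      moreover have "dist (a' v t) (a' v t') \<le> (2*L) * dist t t'" using lip' v by (intro lipschitz_onD) auto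
      hence "\<bar>a' v t - a' v t'\<bar> \<le> 2*L*\<bar>t - t'\<bar>" by (simp add: dist_real_def)
      ultimately have "\<bar>a v t - a' v t'\<bar> \<le> e * \<bar>a v t\<bar> + e + 2*L*\<bar>t - t'\<bar>" by linarith
      also have "\<dots> \<le> K^(Suc n) * X * e"
        by (rule arith2[OF _ A _ Dt G_def K_def D1 L1 LM _ X1 e]) (use Wn in auto)
      finally have B: "\<bar>a v t - a' v t'\<bar> \<le> K^(Suc n) * X * e" .
      show ?thesis using A B ev1 ev2 by simp
    qed
  qed
qed

theorem lemma6p8:
  fixes V :: "'v set" and E :: "('v \<times> 'v) set"
    and a a' :: "'v \<Rightarrow> real \<Rightarrow> real" and lam :: nat and \<epsilon> :: real
    and x b :: "'v \<Rightarrow> real" and w :: "'v \<times> 'v \<Rightarrow> real"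
  assumes dag: "fnn_dag V E"
    and Delta_ge1: "max_in_degree V E \<ge> 1"
    and lam_pos: "lam > 0"
    and lip: "\<forall>v\<in>V. (real lam)-lipschitz_on UNIV (a v)"
    and eps_pos: "\<epsilon> > 0"
    and approx: "\<forall>v\<in>V. eps_approx \<epsilon> (a v) (a' v)"
    and lip': "\<forall>v\<in>V. (2 * real lam)-lipschitz_on UNIV (a' v)"
  shows "let \<Delta> = real (max_in_degree V E); \<mu> = real (act_mu V a); d = dag_depth E;
             \<gamma> = 2 * \<Delta> * real lam * max (real lam) \<mu>;
             \<beta> = (4 * \<Delta> * real lam * \<gamma>) ^ d
         in \<forall>y\<in>out_nodes V E.
              \<bar>fnn_eval V E a x w b y - fnn_eval V E a' x w b y\<bar>
                \<le> \<beta> * (sup_norm E w + 1) ^ d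
                    * (sup_norm (in_nodes V E) x + sup_norm V b + 1) * \<epsilon>"
  proof -
  define D where "D = real (max_in_degree V E)"
  define M where "M = max (real lam) (real (act_mu V a))"
  define Wn where "Wn = sup_norm E w"
  define X where "X = sup_norm (in_nodes V E) x + sup_norm V b + 1"
  define d where "d = dag_depth E"
  have finV: "finite V" and EV: "E \<subseteq> V \<times> V" using dag unfolding fnn_dag_def by auto
  have finE: "finite E" using EV finV finite_subset by blast
  have finI: "finite (in_nodes V E)" using finV unfolding in_nodes_def by simp
  have sn: "\<bar>f i\<bar> \<le> sup_norm S f" if "finite S" "i \<in> S" for S and f :: "_ \<Rightarrow> real" and i
    unfolding sup_norm_def using that by (intro Max_ge) auto
  have sn0: "0 \<le> sup_norm S f" if "finite S" for S and f :: "_ \<Rightarrow> real"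
    unfolding sup_norm_def using that by (intro Max_ge) auto
  have D1: "1 \<le> D" unfolding D_def using Delta_ge1 by simp
  have deg: "\<forall>v\<in>V. real (card {u. (u,v) \<in> E}) \<le> D"
  proof
    fix v assume "v \<in> V"
    hence "in_degree E v \<le> max_in_degree V E" unfolding max_in_degree_def
      using finV by (intro Max_ge) auto
    thus "real (card {u. (u,v) \<in> E}) \<le> D" unfolding D_def in_degree_def by simp
  qed
  have L1: "1 \<le> real lam" using lam_pos by simp
  have LM: "real lam \<le> M" unfolding M_def by simp
  have mu: "\<forall>v\<in>V. \<bar>a v 0\<bar> \<le> M"
  proof
    fix v assume v: "v \<in> V"
    have "\<bar>a v 0\<bar> \<le> real (nat \<lceil>\<bar>a v 0\<bar>\<rceil>)" by linarith
    also have "nat \<lceil>\<bar>a v 0\<bar>\<rceil> \<le> act_mu V a" unfolding act_mu_def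
      using finV v by (intro Max_ge) auto
    hence "real (nat \<lceil>\<bar>a v 0\<bar>\<rceil>) \<le> real (act_mu V a)" by (simp only: of_nat_le_iff)
    also have "\<dots> \<le> M" unfolding M_def by simp
    finally show "\<bar>a v 0\<bar> \<le> M" .
  qed
  have Wn0: "0 \<le> Wn" unfolding Wn_def by (rule sn0[OF finE])
  have Wb: "\<forall>ed\<in>E. \<bar>w ed\<bar> \<le> Wn" unfolding Wn_def using sn[OF finE] by blast
  have sx0: "0 \<le> sup_norm (in_nodes V E) x" by (rule sn0[OF finI])
  have sb0: "0 \<le> sup_norm V b" by (rule sn0[OF finV])
  have xb1: "\<forall>v\<in>in_nodes V E. \<bar>x v\<bar> \<le> X"
  proof
    fix v assume "v \<in> in_nodes V E"
    hence "\<bar>x v\<bar> \<le> sup_norm (in_nodes V E) x" by (rule sn[OF finI])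
    thus "\<bar>x v\<bar> \<le> X" unfolding X_def using sb0 by linarith
  qed
  have xb2: "\<forall>v\<in>V. \<bar>b v\<bar> + 1 \<le> X"
  proof
    fix v assume "v \<in> V"
    hence "\<bar>b v\<bar> \<le> sup_norm V b" by (rule sn[OF finV])
    thus "\<bar>b v\<bar> + 1 \<le> X" unfolding X_def using sx0 by linarith
  qed
  have X1: "1 \<le> X" unfolding X_def using sx0 sb0 by simp
  note MI = main_ind[OF dag deg D1 L1 LM lip lip' approx eps_pos mu Wn0 Wb xb1 xb2 X1, where n = d]
  show ?thesis unfolding Let_def
  proof
    fix y assume y: "y \<in> out_nodes V E"
    hence yV: "y \<in> V" unfolding out_nodes_def by simp
    hence Vne: "V \<noteq> {}" by blast
    have npy: "\<not>(\<exists>p. p (Suc d) = y \<and> (\<forall>i<Suc d. (p i, p (Suc i)) \<in> E))"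
    proof
      assume "\<exists>p. p (Suc d) = y \<and> (\<forall>i<Suc d. (p i, p (Suc i)) \<in> E)"
      then obtain p where "\<forall>i<Suc d. (p i, p (Suc i)) \<in> E" by blast
      hence "Suc d \<le> dag_depth E" using depth_props(2)[OF dag Vne] by blast
      thus False unfolding d_def by simp
    qed
    have dV: "d \<le> card V" using depth_props(1)[OF dag Vne] unfolding d_def by simp
    have "\<bar>fnn_eval V E a x w b y - fnn_eval V E a' x w b y\<bar>
        \<le> (4*D*real lam*(2*D*real lam*M)*(Wn+1))^d * X * \<epsilon>"
    proof -
      have "\<forall>m\<ge>d. \<bar>fnn_eval_fuel m V E a x w b y\<bar> \<le> (2*D*real lam*M*(Wn+1))^d * X \<and>
        \<bar>fnn_eval_fuel m V E a x w b y - fnn_eval_fuel m V E a' x w b y\<bar>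
          \<le> (4*D*real lam*(2*D*real lam*M)*(Wn+1))^d * X * \<epsilon>"
        using MI yV npy by blast
      thus ?thesis unfolding fnn_eval_def using dV by blast
    qed
    thus "\<bar>fnn_eval V E a x w b y - fnn_eval V E a' x w b y\<bar>
        \<le> (4 * real (max_in_degree V E) * real lam * (2 * real (max_in_degree V E) * real lam
            * max (real lam) (real (act_mu V a)))) ^ dag_depth E * (sup_norm E w + 1) ^ dag_depth E
            * (sup_norm (in_nodes V E) x + sup_norm V b + 1) * \<epsilon>"
      unfolding D_def M_def Wn_def X_def d_def by (simp add: power_mult_distrib mult.assoc)
  qed
qed

end
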